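(* Let $\Gamma$ be a connected, undirected graph without loops on $n$ nodes with Laplacian $\mathbf L=\mathbf K-\mathbf A$, and let $\phi_1,\dots,\phi_n$ be an orthonormal basis of $\mathbb R^n$ of eigenvectors of $\mathbf L$ with $\mathbf L\phi_i=\mu_i\phi_i$, and assume $\mu_i\neq 2$ for all $i$. For each $i$ let $\xi_i$ be a (complex) square root of $\mu_i^2-4$, $\lambda_i^+=\tfrac12(\xi_i-\mu_i)$, $\lambda_i^-=-\tfrac12(\xi_i+\mu_i)$. Let $$\mathbf G=\begin{bmatrix}\mathbf 0&\mathbf I\\-\mathbf I&-\mathbf L\end{bmatrix},$$ fix a node $h$, $F_0\in\mathbb R$ and $\omega>0$ with $\omega\neq1$, and let $\mathbf y(t)=(\mathbf x(t),\mathbf v(t))$ solve $\dot{\mathbf y}=\mathbf G\mathbf y+\mathbf b(t)$, $\mathbf y(0)=\mathbf 0$, with $\mathbf b(t)=F_0\sin(\omega t)(\mathbf 0,\mathbf e_h)^T$. Then $$\mathbf x(t)=\sum_{i=1}^n\frac{F_0\phi_i(h)}{\xi_i}\Bigg[\Big(\frac{1-(\lambda_i^-)^2}{\xi_i(\omega^2+(\lambda_i^-)^2)}+\frac{1-(\lambda_i^+)^2}{\xi_i(\omega^2+(\lambda_i^+)^2)}\Big)\sin\omega t+\Big(\frac{1}{\omega^2+(\lambda_i^-)^2}-\frac{1}{\omega^2+(\lambda_i^+)^2}\Big)\omega\cos\omega t+\frac{\omega\, e^{\lambda_i^+t}}{\omega^2+(\lambda_i^+)^2}-\frac{\omega\,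 e^{\lambda_i^-t}}{\omega^2+(\lambda_i^-)^2}\Bigg]\phi_i$$ and $$\mathbf v(t)=\sum_{i=1}^n\frac{F_0\phi_i(h)}{\xi_i}\Bigg[\Big(\frac{\lambda_i^-(1-(\lambda_i^-)^2)}{\xi_i(\omega^2+(\lambda_i^-)^2)}+\frac{\lambda_i^+(1-(\lambda_i^+)^2)}{\xi_i(\omega^2+(\lambda_i^+)^2)}\Big)\sin\omega t+\Big(\frac{\lambda_i^-}{\omega^2+(\lambda_i^-)^2}-\frac{\lambda_i^+}{\omega^2+(\lambda_i^+)^2}\Big)\omega\cos\omega t+\frac{\omega\lambda_i^+ e^{\lambda_i^+t}}{\omega^2+(\lambda_i^+)^2}-\frac{\omega\lambda_i^- e^{\lambda_i^-t}}{\omega^2+(\lambda_i^-)^2}\Bigg]\phi_i.$$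
   Context: $\mathbf A$ is the adjacency matrix, $\mathbf K$ the diagonal degree matrix, $\mathbf I,\mathbf 0$ the $n\times n$ identity and zero matrices, $\mathbf e_h$ the $h$-th standard basis vector, $\phi_i(h)$ the $h$-th component of $\phi_i$. The equation is $\ddot{\mathbf x}+\mathbf L\dot{\mathbf x}+\mathbf x=F_0\sin(\omega t)\mathbf e_h$. $\lambda_i^\pm$ are the two roots of $\lambda^2+\mu_i\lambda+1=0$. *)

theory Defs
  imports "HOL-Analysis.Analysis"
begin

text \<open>Graphs on the node type 'n (n = CARD('n) nodes) given by their adjacency matrix.\<close>

definition simple_graph_adj :: "real^'n^'n \<Rightarrow> bool" where
  "simple_graph_adj A \<longleftrightarrow>
     (\<forall>i j. A$i$j = 0 \<or> A$i$j = 1) \<and> (\<forall>i j. A$i$j = A$j$i) \<and> (\<forall>i. A$i$i = 0)"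

definition connected_adj :: "real^'n^'n \<Rightarrow> bool" where
  "connected_adj A \<longleftrightarrow> (\<forall>i j. (i, j) \<in> {(a, b). A$a$b = 1}\<^sup>*)"

definition degree_matrix :: "real^'n^'n \<Rightarrow> real^'n^'n" where
  "degree_matrix A = (\<chi> i j. if i = j then (\<Sum>k\<in>UNIV. A$i$k) else 0)"

definition laplacian :: "real^'n^'n \<Rightarrow> real^'n^'n" where
  "laplacian A = degree_matrix A - A"

definition G_op :: "real^'n^'n \<Rightarrow> (real^'n) \<times> (real^'n) \<Rightarrow> (real^'n) \<times> (real^'n)" where
  "G_op L y = (mat 0 *v fst y + mat 1 *v snd y, - (mat 1 *v fst y) - L *v snd y)"

definition forcing :: "real \<Rightarrow> real \<Rightarrow> 'n \<Rightarrow> real \<Rightarrow> (real^'n) \<times> (real^'n)" where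
  "forcing F0 \<omega> h t = (0, (F0 * sin (\<omega> * t)) *\<^sub>R axis h 1)"

definition lam_plus :: "real \<Rightarrow> complex \<Rightarrow> complex" where
  "lam_plus \<mu> \<xi> = (\<xi> - complex_of_real \<mu>) / 2"

definition lam_minus :: "real \<Rightarrow> complex \<Rightarrow> complex" where
  "lam_minus \<mu> \<xi> = - (\<xi> + complex_of_real \<mu>) / 2"

text \<open>Coefficient of phi_i in x(t); arguments: F0, omega, mu_i, xi_i, phi_i(h), t.\<close>

definition x_coef :: "real \<Rightarrow> real \<Rightarrow> real \<Rightarrow> complex \<Rightarrow> real \<Rightarrow> real \<Rightarrow> complex" where
  "x_coef F0 \<omega> \<mu> \<xi> ph t =
    (let lp = lam_plus \<mu> \<xi>; lm = lam_minus \<mu> \<xi>; w = complex_of_real \<omega> in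
     complex_of_real F0 * complex_of_real ph / \<xi> *
      ( ((1 - lm\<^sup>2) / (\<xi> * (w\<^sup>2 + lm\<^sup>2)) + (1 - lp\<^sup>2) / (\<xi> * (w\<^sup>2 + lp\<^sup>2))) * complex_of_real (sin (\<omega> * t))
      + (1 / (w\<^sup>2 + lm\<^sup>2) - 1 / (w\<^sup>2 + lp\<^sup>2)) * w * complex_of_real (cos (\<omega> * t))
      + w * exp (lp * complex_of_real t) / (w\<^sup>2 + lp\<^sup>2)
      - w * exp (lm * complex_of_real t) / (w\<^sup>2 + lm\<^sup>2)))"

definition v_coef :: "real \<Rightarrow> real \<Rightarrow> real \<Rightarrow> complex \<Rightarrow> real \<Rightarrow> real \<Rightarrow> complex" where
  "v_coef F0 \<omega> \<mu> \<xi> ph t =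
    (let lp = lam_plus \<mu> \<xi>; lm = lam_minus \<mu> \<xi>; w = complex_of_real \<omega> in
     complex_of_real F0 * complex_of_real ph / \<xi> *
      ( (lm * (1 - lm\<^sup>2) / (\<xi> * (w\<^sup>2 + lm\<^sup>2)) + lp * (1 - lp\<^sup>2) / (\<xi> * (w\<^sup>2 + lp\<^sup>2))) * complex_of_real (sin (\<omega> * t))
      + (lm / (w\<^sup>2 + lm\<^sup>2) - lp / (w\<^sup>2 + lp\<^sup>2)) * w * complex_of_real (cos (\<omega> * t))
      + w * lp * exp (lp * complex_of_real t) / (w\<^sup>2 + lp\<^sup>2)
      - w * lm * exp (lm * complex_of_real t) / (w\<^sup>2 + lm\<^sup>2)))"

end

theory Submission
  imports Defs
begin

lemma first_order_unique:
  fixes R :: "real \<Rightarrow> complex" and l :: complex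
  assumes R0: "R 0 = 0"
    and d: "\<And>t. t \<ge> 0 \<Longrightarrow> (R has_vector_derivative l * R t) (at t within {0..})"
    and t: "t \<ge> 0"
  shows "R t = 0"
proof -
  define S where "S s = exp (- l * of_real s) * R s" for s
  have "(S has_vector_derivative 0) (at s within {0..})" if "s \<in> {0..}" for s
  proof -
    have e: "((\<lambda>x. exp (- l * of_real x)) has_vector_derivative (- l * exp (- l * of_real s))) (at s within {0..})"
      by (rule has_vector_derivative_real_field[where f = "\<lambda>z. exp (- l * z)"])
         (auto intro!: derivative_eq_intros)
    have "(S has_vector_derivative (exp (- l * of_real s) * (l * R s) + (- l * exp (- l * of_real s)) * R s)) (at s within {0..})"
      unfolding S_def by (rule has_vector_derivative_mult[OF e d]) (use that in auto)
    then show ?thesis by (simp add: algebra_simps)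
  qed
  then obtain c where c: "\<And>x. x \<in> {0..} \<Longrightarrow> S x = c"
    using has_vector_derivative_zero_constant[of "{0::real..}" S] by auto
  have "c = 0" using c[of 0] R0 by (simp add: S_def)
  then have "S t = 0" using c t by auto
  then show ?thesis by (simp add: S_def)
qed

definition uf :: "real \<Rightarrow> complex \<Rightarrow> real \<Rightarrow> complex" where
  "uf \<omega> l t = (- l * of_real (sin (\<omega> * t)) - of_real \<omega> * of_real (cos (\<omega> * t))
       + of_real \<omega> * exp (l * of_real t)) / ((of_real \<omega>)\<^sup>2 + l\<^sup>2)"

lemma uf_deriv:
  assumes D: "(of_real \<omega>)\<^sup>2 + l\<^sup>2 \<noteq> 0"
  shows "(uf \<omega> l has_vector_derivative (l * uf \<omega> l t + of_real (sin (\<omega> * t)))) (at t within S)"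
proof -
  have e: "((\<lambda>x. exp (l * of_real x)) has_vector_derivative (l * exp (l * of_real t))) (at t within S)"
    by (rule has_vector_derivative_real_field[where f = "\<lambda>z. exp (l * z)"])
       (auto intro!: derivative_eq_intros)
  have s: "((\<lambda>x. complex_of_real (sin (\<omega> * x))) has_vector_derivative of_real (cos (\<omega> * t) * \<omega>)) (at t within S)"
    by (rule has_vector_derivative_of_real) (auto intro!: derivative_eq_intros)
  have c: "((\<lambda>x. complex_of_real (cos (\<omega> * x))) has_vector_derivative of_real (- sin (\<omega> * t) * \<omega>)) (at t within S)"
    by (rule has_vector_derivative_of_real) (auto intro!: derivative_eq_intros)
  have "(uf \<omega> l has_vector_derivative
     (- l * of_real (cos (\<omega> * t) * \<omega>) - of_real \<omega> * of_real (- sin (\<omega> * t) * \<omega>)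
       + of_real \<omega> * (l * exp (l * of_real t))) / ((of_real \<omega>)\<^sup>2 + l\<^sup>2)) (at t within S)"
    unfolding uf_def
    by (intro has_vector_derivative_divide has_vector_derivative_add has_vector_derivative_diff
        has_vector_derivative_mult_right s c e)
  then show ?thesis
    apply (rule has_vector_derivative_eq_rhs)
    using D by (simp add: uf_def field_simps power2_eq_square)
qed


lemma lam_rel:
  assumes "\<xi>\<^sup>2 = complex_of_real (\<mu>\<^sup>2 - 4)"
  shows "lam_plus \<mu> \<xi> * lam_minus \<mu> \<xi> = 1"
    and "lam_plus \<mu> \<xi> + lam_minus \<mu> \<xi> = - of_real \<mu>"
    and "lam_plus \<mu> \<xi> - lam_minus \<mu> \<xi> = \<xi>"
proof -
  have "lam_plus \<mu> \<xi> * lam_minus \<mu> \<xi> = - (\<xi>\<^sup>2 - (of_real \<mu>)\<^sup>2) / 4"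
    by (simp add: lam_plus_def lam_minus_def field_simps power2_eq_square)
  also have "\<dots> = 1" using assms by (simp add: field_simps)
  finally show "lam_plus \<mu> \<xi> * lam_minus \<mu> \<xi> = 1" .
  show "lam_plus \<mu> \<xi> + lam_minus \<mu> \<xi> = - of_real \<mu>"
    by (simp add: lam_plus_def lam_minus_def field_simps)
  show "lam_plus \<mu> \<xi> - lam_minus \<mu> \<xi> = \<xi>"
    by (simp add: lam_plus_def lam_minus_def field_simps)
qed

lemma denom_nz:
  fixes l :: complex
  assumes q: "l\<^sup>2 + of_real \<mu> * l + 1 = 0" and w: "\<omega> > 0" "\<omega> \<noteq> 1"
  shows "(of_real \<omega>)\<^sup>2 + l\<^sup>2 \<noteq> 0"
proof
  assume D: "(of_real \<omega>)\<^sup>2 + l\<^sup>2 = 0"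
  have l2: "l\<^sup>2 = ((of_real \<omega>)\<^sup>2 + l\<^sup>2) - (of_real \<omega>)\<^sup>2" by simp
  have "of_real \<mu> * l = (l\<^sup>2 + of_real \<mu> * l + 1) - l\<^sup>2 - 1" by (simp add: algebra_simps)
  also have "\<dots> = (of_real \<omega>)\<^sup>2 - 1" using q D l2 by simp
  finally have m: "of_real \<mu> * l = of_real (\<omega>\<^sup>2 - 1)" by simp
  show False
  proof (cases "\<mu> = 0")
    case True
    then have "of_real (\<omega>\<^sup>2 - 1) = (0::complex)" using m by simp
    then have "\<omega>\<^sup>2 = 1" by (simp only: of_real_eq_0_iff)
    then show False using w by (simp add: power2_eq_1_iff)
  next
    case False
    then have "l = of_real ((\<omega>\<^sup>2 - 1) / \<mu>)" using m by (simp add: field_simps)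
    then have "of_real (\<omega>\<^sup>2 + ((\<omega>\<^sup>2 - 1) / \<mu>)\<^sup>2) = (0::complex)" using D by simp
    then have "\<omega>\<^sup>2 + ((\<omega>\<^sup>2 - 1) / \<mu>)\<^sup>2 = 0" by (simp only: of_real_eq_0_iff)
    moreover have "\<omega>\<^sup>2 > 0" using w by simp
    ultimately show False by (smt (verit) zero_le_power2)
  qed
qed

lemma lam_quad:
  assumes "\<xi>\<^sup>2 = complex_of_real (\<mu>\<^sup>2 - 4)"
  shows "(lam_plus \<mu> \<xi>)\<^sup>2 + of_real \<mu> * lam_plus \<mu> \<xi> + 1 = 0"
    and "(lam_minus \<mu> \<xi>)\<^sup>2 + of_real \<mu> * lam_minus \<mu> \<xi> + 1 = 0"
proof -
  note r = lam_rel[OF assms]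
  have m: "of_real \<mu> = - (lam_plus \<mu> \<xi> + lam_minus \<mu> \<xi>)" using r(2) by simp
  show "(lam_plus \<mu> \<xi>)\<^sup>2 + of_real \<mu> * lam_plus \<mu> \<xi> + 1 = 0"
    unfolding m r(1)[symmetric] by (simp add: power2_eq_square algebra_simps)
  show "(lam_minus \<mu> \<xi>)\<^sup>2 + of_real \<mu> * lam_minus \<mu> \<xi> + 1 = 0"
    unfolding m r(1)[symmetric] by (simp add: power2_eq_square algebra_simps)
qed


lemma coef_eqs:
  assumes xi2: "\<xi>\<^sup>2 = complex_of_real (\<mu>\<^sup>2 - 4)" and xi0: "\<xi> \<noteq> 0"
    and Dp: "(of_real \<omega>)\<^sup>2 + (lam_plus \<mu> \<xi>)\<^sup>2 \<noteq> 0"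
    and Dm: "(of_real \<omega>)\<^sup>2 + (lam_minus \<mu> \<xi>)\<^sup>2 \<noteq> 0"
  shows "x_coef F0 \<omega> \<mu> \<xi> ph t = of_real F0 * of_real ph / \<xi> *
            (uf \<omega> (lam_plus \<mu> \<xi>) t - uf \<omega> (lam_minus \<mu> \<xi>) t)"
    and "v_coef F0 \<omega> \<mu> \<xi> ph t = of_real F0 * of_real ph / \<xi> *
            (lam_plus \<mu> \<xi> * uf \<omega> (lam_plus \<mu> \<xi>) t - lam_minus \<mu> \<xi> * uf \<omega> (lam_minus \<mu> \<xi>) t)"
proof -
  define lp where "lp = lam_plus \<mu> \<xi>"
  define lm where "lm = lam_minus \<mu> \<xi>"
  note r = lam_rel[OF xi2, folded lp_def lm_def]
  have em: "1 - lm\<^sup>2 = \<xi> * lm"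
    by (simp add: r(1)[symmetric] r(3)[symmetric] power2_eq_square algebra_simps)
  have ep: "1 - lp\<^sup>2 = - (\<xi> * lp)"
    by (simp add: r(1)[symmetric] r(3)[symmetric] power2_eq_square algebra_simps)
  have a1: "(1 - lm\<^sup>2) / (\<xi> * ((of_real \<omega>)\<^sup>2 + lm\<^sup>2)) = lm / ((of_real \<omega>)\<^sup>2 + lm\<^sup>2)"
    unfolding em using xi0 by simp
  have a2: "(1 - lp\<^sup>2) / (\<xi> * ((of_real \<omega>)\<^sup>2 + lp\<^sup>2)) = - lp / ((of_real \<omega>)\<^sup>2 + lp\<^sup>2)"
    unfolding ep using xi0 by simp
  have a3: "lm * (1 - lm\<^sup>2) / (\<xi> * ((of_real \<omega>)\<^sup>2 + lm\<^sup>2)) = lm * lm / ((of_real \<omega>)\<^sup>2 + lm\<^sup>2)"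
    unfolding em using xi0 by simp
  have a4: "lp * (1 - lp\<^sup>2) / (\<xi> * ((of_real \<omega>)\<^sup>2 + lp\<^sup>2)) = - (lp * lp) / ((of_real \<omega>)\<^sup>2 + lp\<^sup>2)"
    unfolding ep using xi0 by simp
  show "x_coef F0 \<omega> \<mu> \<xi> ph t = of_real F0 * of_real ph / \<xi> *
            (uf \<omega> (lam_plus \<mu> \<xi>) t - uf \<omega> (lam_minus \<mu> \<xi>) t)"
    unfolding x_coef_def Let_def lp_def[symmetric] lm_def[symmetric] a1 a2
    using Dp Dm unfolding lp_def[symmetric] lm_def[symmetric]
    by (simp add: uf_def divide_inverse algebra_simps)
  show "v_coef F0 \<omega> \<mu> \<xi> ph t = of_real F0 * of_real ph / \<xi> *
            (lam_plus \<mu> \<xi> * uf \<omega> (lam_plus \<mu> \<xi>) t - lam_minus \<mu> \<xi> * uf \<omega> (lam_minus \<mu> \<xi>) t)"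
    unfolding v_coef_def Let_def lp_def[symmetric] lm_def[symmetric] a3 a4
    using Dp Dm unfolding lp_def[symmetric] lm_def[symmetric]
    by (simp add: uf_def divide_inverse algebra_simps)
qed


lemma onb_expand:
  fixes \<phi> :: "'n \<Rightarrow> real^'n"
  assumes o: "\<forall>i j. \<phi> i \<bullet> \<phi> j = (if i = j then 1 else 0)" and s: "span (range \<phi>) = UNIV"
  shows "x = (\<Sum>i\<in>UNIV. (\<phi> i \<bullet> x) *\<^sub>R \<phi> i)"
proof -
  define w where "w = x - (\<Sum>i\<in>UNIV. (\<phi> i \<bullet> x) *\<^sub>R \<phi> i)"
  have "\<phi> j \<bullet> w = 0" for j
  proof -
    have "\<phi> j \<bullet> w = \<phi> j \<bullet> x - (\<Sum>i\<in>UNIV. (\<phi> i \<bullet> x) * (\<phi> j \<bullet> \<phi> i))"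
      by (simp add: w_def inner_diff_right inner_sum_right)
    also have "(\<Sum>i\<in>UNIV. (\<phi> i \<bullet> x) * (\<phi> j \<bullet> \<phi> i)) = \<phi> j \<bullet> x"
    proof -
      have "(\<Sum>i\<in>UNIV. (\<phi> i \<bullet> x) * (\<phi> j \<bullet> \<phi> i)) = (\<Sum>i\<in>UNIV. if i = j then \<phi> i \<bullet> x else 0)"
        by (rule sum.cong) (use o in auto)
      then show ?thesis by simp
    qed
    finally show ?thesis by simp
  qed
  then have "orthogonal w z" if "z \<in> span (range \<phi>)" for z
    by (intro orthogonal_to_span[OF that]) (auto simp: orthogonal_def inner_commute)
  then have "w \<bullet> w = 0" using s by (auto simp: orthogonal_def)
  then show ?thesis by (simp add: w_def)
qed

lemma lap_sym:
  assumes "simple_graph_adj A"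
  shows "transpose (laplacian A) = laplacian A"
  using assms unfolding simple_graph_adj_def laplacian_def degree_matrix_def transpose_def
  by (simp add: vec_eq_iff)

lemma lap_eig_nonneg:
  fixes A :: "real^'n^'n"
  assumes g: "simple_graph_adj A" and e: "laplacian A *v x = m *\<^sub>R x" and x0: "x \<noteq> 0"
  shows "m \<ge> 0"
proof (rule ccontr)
  assume neg: "\<not> m \<ge> 0"
  define f where "f k = \<bar>x $ k\<bar>" for k
  have "Max (range f) \<in> range f" by (rule Max_in) auto
  then obtain j where j0: "Max (range f) = f j" by blast
  then have j: "f j = Max (range f)" by simp
  have jm: "f k \<le> f j" for k using j by (simp add: Max_ge)
  have "f j > 0"
  proof (rule ccontr)
    assume "\<not> f j > 0"
    then have "x $ k = 0" for k using jm[of k] by (simp add: f_def)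
    then show False using x0 by (simp add: vec_eq_iff)
  qed
  have A01: "A$a$b = 0 \<or> A$a$b = 1" for a b using g by (simp add: simple_graph_adj_def)
  have Anneg: "A$a$b \<ge> 0" for a b using A01[of a b] by auto
  define K where "K = (\<Sum>k\<in>UNIV. A$j$k)"
  have "(laplacian A *v x) $ j = (\<Sum>k\<in>UNIV. ((if j = k then K else 0) - A$j$k) * x$k)"
    unfolding K_def by (simp add: laplacian_def degree_matrix_def matrix_vector_mult_def)
  also have "\<dots> = (\<Sum>k\<in>UNIV. (if j = k then K * x$k else 0)) - (\<Sum>k\<in>UNIV. A$j$k * x$k)"
  proof -
    have "(\<Sum>k\<in>UNIV. ((if j = k then K else 0) - A$j$k) * x$k) = (\<Sum>k\<in>UNIV. (if j = k then K * x$k else 0) - A$j$k * x$k)"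
      by (rule sum.cong) (auto simp: algebra_simps)
    then show ?thesis by (simp only: sum_subtractf)
  qed
  also have "\<dots> = K * x$j - (\<Sum>k\<in>UNIV. A$j$k * x$k)" by simp
  finally have "(laplacian A *v x) $ j = K * x$j - (\<Sum>k\<in>UNIV. A$j$k * x$k)" .
  then have eq: "(K - m) * x$j = (\<Sum>k\<in>UNIV. A$j$k * x$k)" using e
    by (simp add: algebra_simps)
  have "\<bar>\<Sum>k\<in>UNIV. A$j$k * x$k\<bar> \<le> (\<Sum>k\<in>UNIV. A$j$k * f j)"
  proof -
    have "\<bar>\<Sum>k\<in>UNIV. A$j$k * x$k\<bar> \<le> (\<Sum>k\<in>UNIV. \<bar>A$j$k * x$k\<bar>)" by (rule sum_abs)
    also have "\<dots> \<le> (\<Sum>k\<in>UNIV. A$j$k * f j)"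
      by (rule sum_mono) (use Anneg jm in \<open>auto simp: abs_mult f_def intro: mult_left_mono\<close>)
    finally show ?thesis .
  qed
  also have "\<dots> = K * f j" by (simp add: K_def sum_distrib_right)
  finally have "\<bar>K - m\<bar> * f j \<le> K * f j" using eq by (simp add: abs_mult f_def)
  moreover have "K \<ge> 0" unfolding K_def by (rule sum_nonneg) (use Anneg in auto)
  ultimately have "(K - m) * f j \<le> K * f j" using neg by simp
  then have "- m * f j \<le> 0" by (simp add: algebra_simps)
  then show False using neg \<open>f j > 0\<close> by (smt (verit) mult_neg_pos mult_minus_left)
qed


lemma half_sol:
  fixes c d :: "real \<Rightarrow> real" and l1 l2 :: complex
  assumes c0: "c 0 = 0" "d 0 = 0"
    and dc: "\<And>s. s \<ge> 0 \<Longrightarrow> (c has_real_derivative d s) (at s within {0..})"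
    and dd: "\<And>s. s \<ge> 0 \<Longrightarrow> (d has_real_derivative (- c s - \<mu> * d s + F0 * sin (\<omega> * s) * ph)) (at s within {0..})"
    and ls: "l1 + l2 = - of_real \<mu>" and lp: "l1 * l2 = 1"
    and D: "(of_real \<omega>)\<^sup>2 + l1\<^sup>2 \<noteq> 0" and t: "t \<ge> 0"
  shows "of_real (d t) - l2 * of_real (c t) = of_real (F0 * ph) * uf \<omega> l1 t"
proof -
  define R where "R s = of_real (d s) - l2 * of_real (c s) - of_real (F0 * ph) * uf \<omega> l1 s" for s
  have "R t = 0"
  proof (rule first_order_unique[where l = l1])
    show "R 0 = 0" using c0 by (simp add: R_def uf_def)
    show "t \<ge> 0" by fact
    fix s :: real assume s: "s \<ge> 0"
    have "(R has_vector_derivative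
        (of_real (- c s - \<mu> * d s + F0 * sin (\<omega> * s) * ph) - l2 * of_real (d s)
         - of_real (F0 * ph) * (l1 * uf \<omega> l1 s + of_real (sin (\<omega> * s))))) (at s within {0..})"
      unfolding R_def
      by (intro has_vector_derivative_diff has_vector_derivative_mult_right uf_deriv D
          has_vector_derivative_of_real dc dd s)
    moreover have "of_real (- c s - \<mu> * d s + F0 * sin (\<omega> * s) * ph) - l2 * of_real (d s)
         - of_real (F0 * ph) * (l1 * uf \<omega> l1 s + of_real (sin (\<omega> * s))) = l1 * R s"
    proof -
      have m: "complex_of_real \<mu> = - (l1 + l2)" using ls by simp
      have p: "l1 * (l2 * z) = z" for z using lp by (simp add: mult.assoc[symmetric])
      show ?thesis unfolding R_def
        by (simp add: m algebra_simps p)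
    qed
    ultimately show "(R has_vector_derivative l1 * R s) (at s within {0..})" by simp
  qed
  then show ?thesis by (simp add: R_def)
qed


lemma mode_sol:
  fixes c d :: "real \<Rightarrow> real"
  assumes c0: "c 0 = 0" "d 0 = 0"
    and dc: "\<And>s. s \<ge> 0 \<Longrightarrow> (c has_real_derivative d s) (at s within {0..})"
    and dd: "\<And>s. s \<ge> 0 \<Longrightarrow> (d has_real_derivative (- c s - \<mu> * d s + F0 * sin (\<omega> * s) * ph)) (at s within {0..})"
    and xi2: "\<xi>\<^sup>2 = complex_of_real (\<mu>\<^sup>2 - 4)" and xi0: "\<xi> \<noteq> 0"
    and w: "\<omega> > 0" "\<omega> \<noteq> 1" and t: "t \<ge> 0"
  shows "of_real (c t) = x_coef F0 \<omega> \<mu> \<xi> ph t \<and> of_real (d t) = v_coef F0 \<omega> \<mu> \<xi> ph t"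
proof -
  define lp where "lp = lam_plus \<mu> \<xi>"
  define lm where "lm = lam_minus \<mu> \<xi>"
  note r = lam_rel[OF xi2, folded lp_def lm_def]
  note q = lam_quad[OF xi2, folded lp_def lm_def]
  have Dp: "(of_real \<omega>)\<^sup>2 + lp\<^sup>2 \<noteq> 0" by (rule denom_nz[OF q(1) w])
  have Dm: "(of_real \<omega>)\<^sup>2 + lm\<^sup>2 \<noteq> 0" by (rule denom_nz[OF q(2) w])
  have P1: "of_real (d t) - lm * of_real (c t) = of_real (F0 * ph) * uf \<omega> lp t"
    by (rule half_sol[OF c0 dc dd r(2) r(1) Dp t])
  have P2: "of_real (d t) - lp * of_real (c t) = of_real (F0 * ph) * uf \<omega> lm t"
    by (rule half_sol[OF c0 dc dd _ _ Dm t]) (use r in \<open>simp_all add: algebra_simps\<close>)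
  have "\<xi> * of_real (c t) = of_real (F0 * ph) * (uf \<omega> lp t - uf \<omega> lm t)"
    using P1 P2 r(3) by (simp add: algebra_simps)
  then have X: "of_real (c t) = of_real F0 * of_real ph / \<xi> * (uf \<omega> lp t - uf \<omega> lm t)"
    using xi0 by (simp add: field_simps)
  have "\<xi> * of_real (d t) = of_real (F0 * ph) * (lp * uf \<omega> lp t - lm * uf \<omega> lm t)"
  proof -
    have "\<xi> * of_real (d t) = lp * (of_real (d t) - lm * of_real (c t)) - lm * (of_real (d t) - lp * of_real (c t))"
      using r(3) by (simp add: algebra_simps)
    also have "\<dots> = of_real (F0 * ph) * (lp * uf \<omega> lp t - lm * uf \<omega> lm t)"
      unfolding P1 P2 by (simp add: algebra_simps)
    finally show ?thesis .
  qed
  then have V: "of_real (d t) = of_real F0 * of_real ph / \<xi> * (lp * uf \<omega> lp t - lm * uf \<omega> lm t)"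
    using xi0 by (simp add: field_simps)
  show ?thesis
    using X V coef_eqs[OF xi2 xi0 Dp[unfolded lp_def] Dm[unfolded lm_def], of F0 ph t]
    unfolding lp_def lm_def by simp
qed


theorem proposition4:
  fixes A :: "real^'n^'n" and \<phi> :: "'n \<Rightarrow> real^'n" and \<mu> :: "'n \<Rightarrow> real"
    and \<xi> :: "'n \<Rightarrow> complex" and h :: 'n and F0 \<omega> :: real
    and y :: "real \<Rightarrow> (real^'n) \<times> (real^'n)"
  assumes "simple_graph_adj A" and "connected_adj A"
    and "\<forall>i j. \<phi> i \<bullet> \<phi> j = (if i = j then 1 else 0)"
    and "span (range \<phi>) = UNIV"
    and "\<forall>i. laplacian A *v \<phi> i = \<mu> i *\<^sub>R \<phi> i"
    and "\<forall>i. \<mu> i \<noteq> 2"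
    and "\<forall>i. (\<xi> i)\<^sup>2 = complex_of_real ((\<mu> i)\<^sup>2 - 4)"
    and "\<omega> > 0" and "\<omega> \<noteq> 1"
    and "y 0 = 0"
    and "\<forall>t\<ge>0. (y has_vector_derivative (G_op (laplacian A) (y t) + forcing F0 \<omega> h t)) (at t within {0..})"
  shows "\<forall>t\<ge>0. \<forall>k.
           complex_of_real (fst (y t) $ k) = (\<Sum>i\<in>UNIV. x_coef F0 \<omega> (\<mu> i) (\<xi> i) (\<phi> i $ h) t * complex_of_real (\<phi> i $ k))
         \<and> complex_of_real (snd (y t) $ k) = (\<Sum>i\<in>UNIV. v_coef F0 \<omega> (\<mu> i) (\<xi> i) (\<phi> i $ h) t * complex_of_real (\<phi> i $ k))"
proof (intro allI impI)
  fix t :: real and k :: 'n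
  assume t: "t \<ge> 0"
  define L where "L = laplacian A"
  have Lsym: "transpose L = L" unfolding L_def by (rule lap_sym[OF assms(1)])
  have Lphi: "\<phi> i \<bullet> (L *v v) = \<mu> i * (\<phi> i \<bullet> v)" for i v
  proof -
    have "\<phi> i v* L = L *v \<phi> i" using vector_transpose_matrix[of "\<phi> i" L] Lsym by simp
    then have "\<phi> i \<bullet> (L *v v) = (L *v \<phi> i) \<bullet> v" by (metis dot_lmul_matrix)
    also have "\<dots> = \<mu> i * (\<phi> i \<bullet> v)" using assms(5) by (simp add: L_def)
    finally show ?thesis .
  qed
  have modes: "of_real (\<phi> i \<bullet> fst (y t)) = x_coef F0 \<omega> (\<mu> i) (\<xi> i) (\<phi> i $ h) t
      \<and> of_real (\<phi> i \<bullet> snd (y t)) = v_coef F0 \<omega> (\<mu> i) (\<xi> i) (\<phi> i $ h) t" for i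
  proof (rule mode_sol)
    show "\<phi> i \<bullet> fst (y 0) = 0" "\<phi> i \<bullet> snd (y 0) = 0" using assms(10) by simp_all
    show "(\<xi> i)\<^sup>2 = complex_of_real ((\<mu> i)\<^sup>2 - 4)" using assms(7) by simp
    show "\<omega> > 0" "\<omega> \<noteq> 1" "t \<ge> 0" using assms(8,9) t by simp_all
    have phi0: "\<phi> i \<noteq> 0" using assms(3) by (metis inner_zero_left zero_neq_one)
    have "\<mu> i \<ge> 0" by (rule lap_eig_nonneg[OF assms(1) _ phi0]) (use assms(5) in simp)
    then show "\<xi> i \<noteq> 0"
    proof -
      assume m0: "\<mu> i \<ge> 0"
      show "\<xi> i \<noteq> 0"
      proof
        assume z: "\<xi> i = 0"
        have "complex_of_real ((\<mu> i)\<^sup>2 - 4) = (\<xi> i)\<^sup>2" using assms(7) by simp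
        also have "\<dots> = 0" using z by simp
        finally have "complex_of_real ((\<mu> i)\<^sup>2 - 4) = 0" .
        then have "(\<mu> i)\<^sup>2 - 4 = 0" by (simp only: of_real_eq_0_iff)
        then have "(\<mu> i - 2) * (\<mu> i + 2) = 0" by (simp add: algebra_simps power2_eq_square)
        then show False using m0 assms(6) by auto
      qed
    qed
    fix s :: real assume s: "s \<ge> 0"
    have dy: "(y has_vector_derivative (G_op L (y s) + forcing F0 \<omega> h s)) (at s within {0..})"
      using assms(11) s by (simp add: L_def)
    have fy: "((\<lambda>s. fst (y s)) has_vector_derivative fst (G_op L (y s) + forcing F0 \<omega> h s)) (at s within {0..})"
      by (rule bounded_linear.has_vector_derivative[OF bounded_linear_fst dy])
    have sy: "((\<lambda>s. snd (y s)) has_vector_derivative snd (G_op L (y s) + forcing F0 \<omega> h s)) (at s within {0..})"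
      by (rule bounded_linear.has_vector_derivative[OF bounded_linear_snd dy])
    have "((\<lambda>s. \<phi> i \<bullet> fst (y s)) has_vector_derivative \<phi> i \<bullet> fst (G_op L (y s) + forcing F0 \<omega> h s)) (at s within {0..})"
      by (rule bounded_linear.has_vector_derivative[OF bounded_linear_inner_right fy])
    then show "((\<lambda>s. \<phi> i \<bullet> fst (y s)) has_real_derivative \<phi> i \<bullet> snd (y s)) (at s within {0..})"
      by (simp add: has_real_derivative_iff_has_vector_derivative G_op_def forcing_def)
    have "((\<lambda>s. \<phi> i \<bullet> snd (y s)) has_vector_derivative \<phi> i \<bullet> snd (G_op L (y s) + forcing F0 \<omega> h s)) (at s within {0..})"
      by (rule bounded_linear.has_vector_derivative[OF bounded_linear_inner_right sy])
    moreover have "\<phi> i \<bullet> snd (G_op L (y s) + forcing F0 \<omega> h s)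
        = - (\<phi> i \<bullet> fst (y s)) - \<mu> i * (\<phi> i \<bullet> snd (y s)) + F0 * sin (\<omega> * s) * (\<phi> i $ h)"
      by (simp add: G_op_def forcing_def inner_diff_right inner_add_right Lphi inner_axis)
    ultimately show "((\<lambda>s. \<phi> i \<bullet> snd (y s)) has_real_derivative
        - (\<phi> i \<bullet> fst (y s)) - \<mu> i * (\<phi> i \<bullet> snd (y s)) + F0 * sin (\<omega> * s) * (\<phi> i $ h)) (at s within {0..})"
      by (simp add: has_real_derivative_iff_has_vector_derivative)
  qed
  have ex: "z $ k = (\<Sum>i\<in>UNIV. (\<phi> i \<bullet> z) * \<phi> i $ k)" for z
    by (subst onb_expand[OF assms(3,4), of z]) simp
  show "complex_of_real (fst (y t) $ k) = (\<Sum>i\<in>UNIV. x_coef F0 \<omega> (\<mu> i) (\<xi> i) (\<phi> i $ h) t * complex_of_real (\<phi> i $ k))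
         \<and> complex_of_real (snd (y t) $ k) = (\<Sum>i\<in>UNIV. v_coef F0 \<omega> (\<mu> i) (\<xi> i) (\<phi> i $ h) t * complex_of_real (\<phi> i $ k))"
  proof
    show "complex_of_real (fst (y t) $ k) = (\<Sum>i\<in>UNIV. x_coef F0 \<omega> (\<mu> i) (\<xi> i) (\<phi> i $ h) t * complex_of_real (\<phi> i $ k))"
      unfolding ex[of "fst (y t)"] of_real_sum of_real_mult
      by (rule sum.cong) (use modes in auto)
    show "complex_of_real (snd (y t) $ k) = (\<Sum>i\<in>UNIV. v_coef F0 \<omega> (\<mu> i) (\<xi> i) (\<phi> i $ h) t * complex_of_real (\<phi> i $ k))"
      unfolding ex[of "snd (y t)"] of_real_sum of_real_mult
      by (rule sum.cong) (use modes in auto)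
  qed
qed

end
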